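(* Let $\omega$ be a weight on $\mathbb N^2$, and let $(r_i)$, $(s_i)$ be sequences of positive real numbers such that $$r_{i_1}^{\alpha_1}\cdots r_{i_k}^{\alpha_k}s_{i_1}^{\beta_1}\cdots s_{i_k}^{\beta_k}\le\omega\big(p_{i_1}^{\alpha_1}\cdots p_{i_k}^{\alpha_k},\,p_{i_1}^{\beta_1}\cdots p_{i_k}^{\beta_k}\big)$$ whenever $k\in\mathbb N$, the $p_{i_j}$ are distinct primes and $\alpha_j,\beta_j\in\mathbb N_0$. Then, under the identification of $\Delta(\ell^1(\mathbb N^2,\omega))$ with pairs of complex sequences, $$\prod_{i=1}^\infty\overline{B(0,r_i)}\times\prod_{i=1}^\infty\overline{B(0,s_i)}\subset\Delta(\ell^1(\mathbb N^2,\omega))\subset\prod_{i=1}^\infty\overline{B(0,\rho_i)}\times\prod_{i=1}^\infty\overline{B(0,\mu_i)}.$$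
   Context: $\mathbb N_0=\mathbb N\cup\{0\}$; $p_1<p_2<\cdots$ are the primes in increasing order; $\overline{B(a,r)}=\{z\in\mathbb C:|z-a|\le r\}$. A weight on $\mathbb N^2$ (semigroup under coordinatewise multiplication) is $\omega:\mathbb N^2\to[1,\infty)$ with $\omega(xy)\le\omega(x)\omega(y)$. $\rho_i=\lim_{n\to\infty}\omega(p_i^n,1)^{1/n}=\inf_n\omega(p_i^n,1)^{1/n}$ and $\mu_i=\lim_{n\to\infty}\omega(1,p_i^n)^{1/n}=\inf_n\omega(1,p_i^n)^{1/n}$. $\ell^1(\mathbb N^2,\omega)$ is the weighted convolution algebra $\{a:\sum|a(m,n)|\omega(m,n)<\infty\}$ with $(a\star b)(m,n)=\sum_{u_1u_2=m,v_1v_2=n}a(u_1,v_1)b(u_2,v_2)$. Its Gel'fand space $\Delta(\ell^1(\mathbb N^2,\omega))$ is identified with the set of $\omega$-bounded semicharacters $\chi$ (nonzero multiplicative maps $\mathbb N^2\to\mathbb C$ with $|\chi|\le\omega$), and each such $\chi$ is identified with the pair of sequences $((\chi(p_i,1))_i,(\chi(1,p_i))_i)\in\mathbb C^{\mathbb N}\times\mathbb C^{\mathbb N}$; a pair of sequences lies in $\Delta$ iff the semicharacter it determines is $\omega$-bounded. *)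

theory Defs
  imports "HOL-Analysis.Analysis" "HOL-Computational_Algebra.Primes" "HOL-Library.Infinite_Set"
begin

text \<open>The i-th prime, 0-based: nthp 0 = 2 = p_1, nthp i = p_(i+1).\<close>
definition nthp :: "nat \<Rightarrow> nat" where
  "nthp i = enumerate {p. prime p} i"

definition N2 :: "(nat \<times> nat) set" where
  "N2 = {(m, n). m \<ge> 1 \<and> n \<ge> 1}"

definition pmul :: "nat \<times> nat \<Rightarrow> nat \<times> nat \<Rightarrow> nat \<times> nat" where
  "pmul x y = (fst x * fst y, snd x * snd y)"

definition is_weight :: "(nat \<times> nat \<Rightarrow> real) \<Rightarrow> bool" where
  "is_weight w \<longleftrightarrow> (\<forall>x\<in>N2. w x \<ge> 1) \<and>
     (\<forall>x\<in>N2. \<forall>y\<in>N2. w (pmul x y) \<le> w x * w y)"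

definition semicharacter :: "(nat \<times> nat \<Rightarrow> complex) \<Rightarrow> bool" where
  "semicharacter c \<longleftrightarrow> (\<exists>x\<in>N2. c x \<noteq> 0) \<and>
     (\<forall>x\<in>N2. \<forall>y\<in>N2. c (pmul x y) = c x * c y)"

definition bounded_semichar :: "(nat \<times> nat \<Rightarrow> real) \<Rightarrow> (nat \<times> nat \<Rightarrow> complex) \<Rightarrow> bool" where
  "bounded_semichar w c \<longleftrightarrow> semicharacter c \<and> (\<forall>x\<in>N2. cmod (c x) \<le> w x)"

text \<open>Gelfand space, identified with pairs of sequences (0-based indexing).\<close>
definition Delta :: "(nat \<times> nat \<Rightarrow> real) \<Rightarrow> ((nat \<Rightarrow> complex) \<times> (nat \<Rightarrow> complex)) set" where
  "Delta w = {((\<lambda>i. c (nthp i, 1)), (\<lambda>i. c (1, nthp i))) | c. bounded_semichar w c}"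

definition rho :: "(nat \<times> nat \<Rightarrow> real) \<Rightarrow> nat \<Rightarrow> real" where
  "rho w i = (INF n\<in>{1..}. w (nthp i ^ n, 1) powr (1 / real n))"

definition mu :: "(nat \<times> nat \<Rightarrow> real) \<Rightarrow> nat \<Rightarrow> real" where
  "mu w i = (INF n\<in>{1..}. w (1, nthp i ^ n) powr (1 / real n))"

end

theory Submission
  imports Defs
begin

lemma nthp_prime: "prime (nthp i)"
  unfolding nthp_def using enumerate_in_set[OF primes_infinite] by auto

lemma nthp_smono: "strict_mono nthp"
  unfolding nthp_def strict_mono_def using enumerate_mono[OF _ primes_infinite] by blast

lemma nthp_ge: "i \<le> nthp i"
  using strict_mono_imp_increasing[OF nthp_smono] .

lemma nthp_inj: "inj nthp"
  using strict_mono_imp_inj_on[OF nthp_smono] .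

lemma nthp_surj: "prime p \<Longrightarrow> \<exists>j. p = nthp j"
  using bij_betw_imp_surj_on[OF bij_enumerate[OF primes_infinite]] unfolding nthp_def
  by (metis (mono_tags, lifting) imageE mem_Collect_eq)

lemma mult_zero_big: "(m::nat) > 0 \<Longrightarrow> m < i \<Longrightarrow> multiplicity (nthp i) m = 0"
proof -
  assume a: "m > 0" "m < i"
  have "m < nthp i" using nthp_ge[of i] a by linarith
  hence "\<not> nthp i dvd m" using a by (meson dvd_imp_le not_le)
  thus ?thesis by (rule not_dvd_imp_multiplicity_0)
qed

definition F :: "(nat \<Rightarrow> complex) \<Rightarrow> nat \<Rightarrow> nat \<Rightarrow> complex" where
  "F f m K = (\<Prod>i<K. f i ^ multiplicity (nthp i) m)"

lemma F_indep: "(m::nat) > 0 \<Longrightarrow> m < K \<Longrightarrow> F f m K = F f m (m+1)"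
  unfolding F_def
  by (rule prod.mono_neutral_right) (auto simp: mult_zero_big)

lemma F_mult: "m1 > 0 \<Longrightarrow> m2 > 0 \<Longrightarrow> F f (m1*m2) K = F f m1 K * F f m2 K"
  unfolding F_def
  by (simp add: prime_elem_multiplicity_mult_distrib nthp_prime power_add prod.distrib)

lemma prod_nthp: "(m::nat) > 0 \<Longrightarrow> m < K \<Longrightarrow> (\<Prod>i<K. nthp i ^ multiplicity (nthp i) m) = m"
proof -
  assume a: "m > 0" "m < K"
  have "(\<Prod>i<K. nthp i ^ multiplicity (nthp i) m) = (\<Prod>p\<in>nthp ` {..<K}. p ^ multiplicity p m)"
    by (subst prod.reindex) (auto intro: inj_on_subset[OF nthp_inj])
  also have "\<dots> = (\<Prod>p\<in>prime_factors m. p ^ multiplicity p m)"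
  proof (rule prod.mono_neutral_right)
    show "prime_factors m \<subseteq> nthp ` {..<K}"
    proof
      fix p assume p: "p \<in> prime_factors m"
      hence pp: "prime p" "p dvd m" by (auto simp: in_prime_factors_iff)
      then obtain j where j: "p = nthp j" using nthp_surj by blast
      have "p \<le> m" using pp a dvd_imp_le by blast
      hence "j < K" using nthp_ge[of j] j a by linarith
      thus "p \<in> nthp ` {..<K}" using j by blast
    qed
    show "\<forall>i\<in>nthp ` {..<K} - prime_factors m. i ^ multiplicity i m = 1"
      using a nthp_prime by (auto simp: in_prime_factors_iff not_dvd_imp_multiplicity_0)
  qed auto
  also have "\<dots> = m" using prime_factorization_nat[OF a(1)] by simp
  finally show ?thesis .
qed

theorem mainTheorem5:
  fixes w :: "nat \<times> nat \<Rightarrow> real" and r s :: "nat \<Rightarrow> real"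
  assumes "is_weight w"
    and "\<And>i. r i > 0" and "\<And>i. s i > 0"
    and "\<And>I \<alpha> \<beta>. finite I \<Longrightarrow> I \<noteq> {} \<Longrightarrow>
           (\<Prod>i\<in>I. r i ^ \<alpha> i * s i ^ \<beta> i)
             \<le> w (\<Prod>i\<in>I. nthp i ^ \<alpha> i, \<Prod>i\<in>I. nthp i ^ \<beta> i)"
  shows "{(a, b). \<forall>i. cmod (a i) \<le> r i \<and> cmod (b i) \<le> s i} \<subseteq> Delta w
         \<and> Delta w \<subseteq> {(a, b). \<forall>i. cmod (a i) \<le> rho w i \<and> cmod (b i) \<le> mu w i}"
proof
  show "{(a, b). \<forall>i. cmod (a i) \<le> r i \<and> cmod (b i) \<le> s i} \<subseteq> Delta w"
  proof clarsimp
    fix a b assume ab: "\<forall>i. cmod (a i) \<le> r i \<and> cmod (b i) \<le> s i"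
    define c where "c = (\<lambda>(m,n). F a m (m+1) * F b n (n+1))"
    have cK: "c (m,n) = F a m K * F b n K" if "m > 0" "n > 0" "m < K" "n < K" for m n K
      using that F_indep[of m K] F_indep[of n K] by (simp add: c_def)
    have mul: "c (pmul x y) = c x * c y" if "x \<in> N2" "y \<in> N2" for x y
    proof -
      obtain m1 n1 m2 n2 where xy: "x = (m1,n1)" "y = (m2,n2)" by (cases x, cases y) auto
      have pos: "m1 > 0" "n1 > 0" "m2 > 0" "n2 > 0" using that xy by (auto simp: N2_def)
      define K where "K = m1*m2 + n1*n2 + 1"
      have le4: "m1 \<le> m1*m2" "m2 \<le> m1*m2" "n1 \<le> n1*n2" "n2 \<le> n1*n2" using pos by auto
      have lt: "m1 < K" "m2 < K" "n1 < K" "n2 < K" "m1*m2 < K" "n1*n2 < K" unfolding K_def using le4 by linarith+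
      have "c (pmul x y) = F a (m1*m2) K * F b (n1*n2) K"
        using cK[of "m1*m2" "n1*n2" K] pos lt by (simp add: xy pmul_def)
      also have "\<dots> = (F a m1 K * F b n1 K) * (F a m2 K * F b n2 K)"
        using pos by (simp add: F_mult mult_ac)
      also have "\<dots> = c x * c y" using cK pos lt xy by simp
      finally show ?thesis .
    qed
    have c11: "c (1,1) = 1" by (simp add: c_def F_def)
    have bnd: "cmod (c x) \<le> w x" if "x \<in> N2" for x
    proof -
      obtain m n where x: "x = (m,n)" by (cases x)
      have pos: "m > 0" "n > 0" using that x by (auto simp: N2_def)
      define K where "K = m + n + 1"
      have lt: "m < K" "n < K" unfolding K_def using pos by auto
      define \<alpha> where "\<alpha> = (\<lambda>i. multiplicity (nthp i) m)"
      define \<beta> where "\<beta> = (\<lambda>i. multiplicity (nthp i) n)"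
      have "cmod (c x) = cmod (F a m K) * cmod (F b n K)"
        using cK[OF pos lt] x by (simp add: norm_mult)
      also have "\<dots> \<le> (\<Prod>i<K. r i ^ \<alpha> i) * (\<Prod>i<K. s i ^ \<beta> i)"
      proof (rule mult_mono)
        show "cmod (F a m K) \<le> (\<Prod>i<K. r i ^ \<alpha> i)"
          unfolding F_def \<alpha>_def prod_norm[symmetric] norm_power
          by (rule prod_mono) (simp add: ab power_mono)
        show "cmod (F b n K) \<le> (\<Prod>i<K. s i ^ \<beta> i)"
          unfolding F_def \<beta>_def prod_norm[symmetric] norm_power
          by (rule prod_mono) (simp add: ab power_mono)
      qed (auto intro: prod_nonneg simp: less_imp_le assms(2))
      also have "\<dots> = (\<Prod>i<K. r i ^ \<alpha> i * s i ^ \<beta> i)" by (simp add: prod.distrib)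
      also have "\<dots> \<le> w (\<Prod>i<K. nthp i ^ \<alpha> i, \<Prod>i<K. nthp i ^ \<beta> i)"
        using assms(4)[of "{..<K}" \<alpha> \<beta>] lt by auto
      also have "\<dots> = w x" unfolding \<alpha>_def \<beta>_def using prod_nthp pos lt x by simp
      finally show ?thesis .
    qed
    have "bounded_semichar w c"
      unfolding bounded_semichar_def semicharacter_def
      proof (intro conjI)
      show "\<exists>x\<in>N2. c x \<noteq> 0" using c11 by (intro bexI[of _ "(1,1)"]) (auto simp: N2_def)
    qed (use mul bnd in auto)
    moreover have "(\<lambda>i. c (nthp i, 1)) = a"
    proof
      fix i
      have "c (nthp i, 1) = F a (nthp i) (nthp i + 1)" by (simp add: c_def F_def)
      also have "\<dots> = a i"
        unfolding F_def
      proof -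
        have "(\<Prod>j<nthp i + 1. a j ^ multiplicity (nthp j) (nthp i)) = (\<Prod>j\<in>{i}. a j ^ multiplicity (nthp j) (nthp i))"
          apply (rule prod.mono_neutral_right)
          using nthp_ge[of i] nthp_inj nthp_prime
          by (auto simp: prime_multiplicity_other inj_eq)
        thus "(\<Prod>j<nthp i + 1. a j ^ multiplicity (nthp j) (nthp i)) = a i"
          using nthp_prime by simp
      qed
      finally show "c (nthp i, 1) = a i" .
    qed
    moreover have "(\<lambda>i. c (1, nthp i)) = b"
    proof
      fix i
      have "c (1, nthp i) = F b (nthp i) (nthp i + 1)" by (simp add: c_def F_def)
      also have "\<dots> = b i"
        unfolding F_def
      proof -
        have "(\<Prod>j<nthp i + 1. b j ^ multiplicity (nthp j) (nthp i)) = (\<Prod>j\<in>{i}. b j ^ multiplicity (nthp j) (nthp i))"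
          apply (rule prod.mono_neutral_right)
          using nthp_ge[of i] nthp_inj nthp_prime
          by (auto simp: prime_multiplicity_other inj_eq)
        thus "(\<Prod>j<nthp i + 1. b j ^ multiplicity (nthp j) (nthp i)) = b i"
          using nthp_prime by simp
      qed
      finally show "c (1, nthp i) = b i" .
    qed
    ultimately show "(a, b) \<in> Delta w" unfolding Delta_def by blast
  qed
next
  show "Delta w \<subseteq> {(a, b). \<forall>i. cmod (a i) \<le> rho w i \<and> cmod (b i) \<le> mu w i}"
  proof
    fix x assume x: "x \<in> Delta w"
    obtain a b where xab: "x = (a, b)" by (cases x)
    have "(a, b) \<in> Delta w" using x xab by simp
    then obtain c where c: "bounded_semichar w c" and ab: "a = (\<lambda>i. c (nthp i, 1))" "b = (\<lambda>i. c (1, nthp i))"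
      unfolding Delta_def by blast
    have mul: "\<And>x y. x \<in> N2 \<Longrightarrow> y \<in> N2 \<Longrightarrow> c (pmul x y) = c x * c y"
      and bd: "\<And>x. x \<in> N2 \<Longrightarrow> cmod (c x) \<le> w x"
      using c unfolding bounded_semichar_def semicharacter_def by auto
    have pw1: "c (q ^ n, 1) = c (q, 1) ^ n" if "n \<ge> 1" "q > 0" for q n
      using that
    proof (induction n rule: dec_induct)
      case (step k)
      have "c (q ^ Suc k, 1) = c (pmul (q, 1) (q ^ k, 1))" by (simp add: pmul_def)
      also have "\<dots> = c (q,1) * c (q^k, 1)" using mul step by (simp add: N2_def)
      finally show ?case using step by simp
    qed simp
    have pw2: "c (1, q ^ n) = c (1, q) ^ n" if "n \<ge> 1" "q > 0" for q n
      using that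
    proof (induction n rule: dec_induct)
      case (step k)
      have "c (1, q ^ Suc k) = c (pmul (1, q) (1, q ^ k))" by (simp add: pmul_def)
      also have "\<dots> = c (1, q) * c (1, q^k)" using mul step by (simp add: N2_def)
      finally show ?case using step by simp
    qed simp
    have key: "cmod z \<le> (INF n\<in>{1..}. v n powr (1 / real n))"
      if h: "\<And>n. n \<ge> 1 \<Longrightarrow> cmod z ^ n \<le> v n" for z :: complex and v :: "nat \<Rightarrow> real"
    proof (rule cINF_greatest)
      show "{1::nat..} \<noteq> {}" by auto
      fix n :: nat assume n: "n \<in> {1..}"
      have "cmod z = (cmod z ^ n) powr (1 / real n)"
        using n by (cases "z = 0") (auto simp: powr_realpow [symmetric] powr_powr)
      also have "\<dots> \<le> v n powr (1 / real n)"
        using h[of n] n by (intro powr_mono2) auto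
      finally show "cmod z \<le> v n powr (1 / real n)" .
    qed
    have pp: "nthp i > 0" for i using nthp_prime[of i] prime_gt_0_nat by blast
    have "\<forall>i. cmod (a i) \<le> rho w i \<and> cmod (b i) \<le> mu w i"
    proof
      fix i
      have "cmod (c (nthp i, 1)) \<le> rho w i" unfolding rho_def
      proof (rule key[where v="\<lambda>n. w (nthp i ^ n, 1)"])
        fix n :: nat assume n: "n \<ge> 1"
        have "(nthp i ^ n, 1) \<in> N2" using pp[of i] by (simp add: N2_def)
        thus "cmod (c (nthp i, 1)) ^ n \<le> w (nthp i ^ n, 1)" using pw1[OF n pp] bd by (metis norm_power)
      qed
      moreover have "cmod (c (1, nthp i)) \<le> mu w i" unfolding mu_def
      proof (rule key[where v="\<lambda>n. w (1, nthp i ^ n)"])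
        fix n :: nat assume n: "n \<ge> 1"
        have "(1, nthp i ^ n) \<in> N2" using pp[of i] by (simp add: N2_def)
        thus "cmod (c (1, nthp i)) ^ n \<le> w (1, nthp i ^ n)" using pw2[OF n pp] bd by (metis norm_power)
      qed
      ultimately show "cmod (a i) \<le> rho w i \<and> cmod (b i) \<le> mu w i" by (simp add: ab)
    qed
    thus "x \<in> {(a, b). \<forall>i. cmod (a i) \<le> rho w i \<and> cmod (b i) \<le> mu w i}" using xab by simp
  qed
qed

end
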